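(* Let $\lambda,t_0,t_1\in\mathbb{R}$, let $T:\mathbb{Z}\to\mathbb{R}$ be the $2$-periodic sequence with $T(2j)=t_0$, $T(2j+1)=t_1$, and let $\omega\in\mathbb{R}$ with $\omega/2\pi$ irrational. If $t_0=0$, then the Lyapunov exponent of the periodic coupling AMO model satisfies $L(0)=0$, regardless of the value of $t_1$.
   Context: The periodic coupling AMO model is the family of operators on $\ell^2(\mathbb{Z})$, $(H_\theta u)(n)=u(n+1)+u(n-1)+\lambda T(n)\cos(\theta+n\omega)u(n)$, $\theta\in S^1=\mathbb{R}/2\pi\mathbb{Z}$. For $E\in\mathbb{R}$ and $h\in\{0,1\}$ let $A_E(\theta,h)=\begin{pmatrix}E-\lambda T(h)\cos\theta&-1\\1&0\end{pmatrix}$, and let $B_E(\theta)=A_E(\theta+\omega,1)A_E(\theta,0)$, viewed as a cocycle over the rotation $\theta\mapsto\theta+2\omega$ on $S^1$, with $B_E^m(\theta)=B_E(\theta+2(m-1)\omega)\cdots B_E(\theta+2\omega)B_E(\theta)$. The Lyapunov exponent is $L(E)=\lim_{m\to\infty}\frac{1}{2m}\int_{S^1}\log\|B_E^m(\theta)\|\frac{d\theta}{2\pi}$ (equivalently, the Lyapunov exponent of the one-step cocycle over $S^1\times\mathbb{Z}_2$ with respect to the uniform product measure); in particular $L(E)=0$ iff the exponent of the cocycle $(2\omega,B_E)$ is zero. *)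

theory Defs
  imports "HOL-Analysis.Analysis"
begin

definition Tper :: "real \<Rightarrow> real \<Rightarrow> int \<Rightarrow> real" where
  "Tper t0 t1 n = (if even n then t0 else t1)"

definition Amat :: "real \<Rightarrow> (int \<Rightarrow> real) \<Rightarrow> real \<Rightarrow> real \<Rightarrow> int \<Rightarrow> real^2^2" where
  "Amat lam T E \<theta> h =
     vector [vector [E - lam * T h * cos \<theta>, -1], vector [1, 0]]"

definition Bmat :: "real \<Rightarrow> (int \<Rightarrow> real) \<Rightarrow> real \<Rightarrow> real \<Rightarrow> real \<Rightarrow> real^2^2" where
  "Bmat lam T \<omega> E \<theta> = Amat lam T E (\<theta> + \<omega>) 1 ** Amat lam T E \<theta> 0"

fun Biter :: "real \<Rightarrow> (int \<Rightarrow> real) \<Rightarrow> real \<Rightarrow> real \<Rightarrow> nat \<Rightarrow> real \<Rightarrow> real^2^2" where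
  "Biter lam T \<omega> E 0 \<theta> = mat 1"
| "Biter lam T \<omega> E (Suc m) \<theta> =
     Bmat lam T \<omega> E (\<theta> + 2 * real m * \<omega>) ** Biter lam T \<omega> E m \<theta>"

definition opnorm :: "real^2^2 \<Rightarrow> real" where
  "opnorm M = onorm (\<lambda>x. M *v x)"

text \<open>The m-th term of the sequence whose limit is the Lyapunov exponent:
  1/(2m) * \<integral>_{S^1} log ||B_E^m(theta)|| dtheta/(2 pi).\<close>
definition lyap_term :: "real \<Rightarrow> (int \<Rightarrow> real) \<Rightarrow> real \<Rightarrow> real \<Rightarrow> nat \<Rightarrow> real" where
  "lyap_term lam T \<omega> E m =
     1 / (2 * real m) *
       (integral {0..2*pi} (\<lambda>\<theta>. ln (opnorm (Biter lam T \<omega> E m \<theta>))) / (2 * pi))"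

end

theory Submission
  imports Defs "HOL-Real_Asymp.Real_Asymp"
begin

definition Um :: "real \<Rightarrow> real^2^2" where
  "Um a = vector [vector [1, a], vector [0, 1]]"

lemma Bmat_eq:
  "Bmat lam (Tper 0 t1) \<omega> 0 \<theta> = (-1::real) *\<^sub>R Um (- (lam * t1 * cos (\<theta> + \<omega>)))"
  unfolding Bmat_def Amat_def Um_def Tper_def
  by (simp add: vec_eq_iff forall_2 matrix_matrix_mult_def sum_2 vector_2)

lemma Um_mult: "Um a ** Um b = Um (a + b)"
  unfolding Um_def
  by (simp add: vec_eq_iff forall_2 matrix_matrix_mult_def sum_2 vector_2)

lemma Um_0: "Um 0 = mat 1"
  unfolding Um_def by (simp add: vec_eq_iff forall_2 mat_def vector_2)

lemma scaleR_mm: "((s::real) *\<^sub>R A) ** ((r::real) *\<^sub>R (B::real^2^2)) = (s*r) *\<^sub>R (A ** (B::real^2^2))"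
  by (simp add: vec_eq_iff matrix_matrix_mult_def sum_distrib_left algebra_simps)

lemma Biter_eq:
  "Biter lam (Tper 0 t1) \<omega> 0 m \<theta> =
     ((-1::real)^m) *\<^sub>R Um (\<Sum>k<m. - (lam * t1 * cos (\<theta> + 2 * real k * \<omega> + \<omega>)))"
proof (induction m)
  case 0 then show ?case by (simp add: Um_0)
next
  case (Suc m)
  show ?case
    unfolding Biter.simps Suc Bmat_eq scaleR_mm Um_mult
    by (simp add: ac_simps)
qed

lemma Um_mv: "Um a *v x = x + (a * x$2) *\<^sub>R axis 1 1"
  unfolding Um_def
  by (simp add: vec_eq_iff forall_2 matrix_vector_mult_def sum_2 vector_2 axis_def)

lemma opnorm_bounds:
  assumes "\<bar>s\<bar> = 1"
  shows "1 \<le> opnorm (s *\<^sub>R Um a) \<and> opnorm (s *\<^sub>R Um a) \<le> 1 + \<bar>a\<bar>"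
proof
  have mv: "(s *\<^sub>R Um a) *v x = s *\<^sub>R (x + (a * x$2) *\<^sub>R axis 1 1)" for x
    unfolding Um_def
    by (simp add: vec_eq_iff forall_2 matrix_vector_mult_def sum_2 vector_2 axis_def algebra_simps)
  have "norm ((s *\<^sub>R Um a) *v axis 1 1) \<le> opnorm (s *\<^sub>R Um a) * norm (axis 1 (1::real) :: real^2)"
    unfolding opnorm_def by (rule onorm) simp
  moreover have "(s *\<^sub>R Um a) *v axis 1 1 = s *\<^sub>R (axis 1 1 :: real^2)"
    by (simp add: mv axis_def)
  ultimately show "1 \<le> opnorm (s *\<^sub>R Um a)" using assms by (simp add: norm_axis_1)
  show "opnorm (s *\<^sub>R Um a) \<le> 1 + \<bar>a\<bar>"
    unfolding opnorm_def
  proof (rule onorm_le)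
    fix x :: "real^2"
    have "norm ((s *\<^sub>R Um a) *v x) = norm (x + (a * x$2) *\<^sub>R axis 1 1)"
      using assms by (simp add: mv)
    also have "\<dots> \<le> norm x + \<bar>a\<bar> * \<bar>x$2\<bar>"
      by (rule order_trans[OF norm_triangle_ineq]) (simp add: norm_axis_1 abs_mult)
    also have "\<dots> \<le> norm x + \<bar>a\<bar> * norm x"
      by (simp add: mult_left_mono component_le_norm_cart)
    finally show "norm ((s *\<^sub>R Um a) *v x) \<le> (1 + \<bar>a\<bar>) * norm x"
      by (simp add: algebra_simps)
  qed
qed


lemma f_bounds:
  "0 \<le> ln (opnorm (Biter lam (Tper 0 t1) \<omega> 0 m \<theta>)) \<and>
   ln (opnorm (Biter lam (Tper 0 t1) \<omega> 0 m \<theta>)) \<le> ln (1 + real m * \<bar>lam * t1\<bar>)"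
proof -
  define a where "a = (\<Sum>k<m. - (lam * t1 * cos (\<theta> + 2 * real k * \<omega> + \<omega>)))"
  have B: "Biter lam (Tper 0 t1) \<omega> 0 m \<theta> = ((-1::real)^m) *\<^sub>R Um a"
    unfolding a_def by (rule Biter_eq)
  have ob: "1 \<le> opnorm (((-1::real)^m) *\<^sub>R Um a) \<and> opnorm (((-1::real)^m) *\<^sub>R Um a) \<le> 1 + \<bar>a\<bar>"
    by (rule opnorm_bounds) simp
  have "\<bar>a\<bar> \<le> (\<Sum>k<m. \<bar>lam * t1 * cos (\<theta> + 2 * real k * \<omega> + \<omega>)\<bar>)"
    unfolding a_def by (rule order_trans[OF sum_abs]) simp
  also have "\<dots> \<le> (\<Sum>k<m. \<bar>lam * t1\<bar>)"
    by (rule sum_mono) (simp add: abs_mult mult_left_le)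
  finally have "\<bar>a\<bar> \<le> real m * \<bar>lam * t1\<bar>" by simp
  with ob show ?thesis unfolding B by auto
qed

lemma lim_aux: "(\<lambda>m. ln (1 + real m * K) / (2 * real m)) \<longlonglongrightarrow> 0" if "K \<ge> 0" for K :: real
proof (cases "K = 0")
  case True then show ?thesis by simp
next
  case False
  with that have "K > 0" by simp
  then show ?thesis by real_asymp
qed

theorem mainTheorem2:
  fixes lam t0 t1 \<omega> :: real
  assumes "\<omega> / (2 * pi) \<notin> \<rat>"
    and "t0 = 0"
  shows "lyap_term lam (Tper t0 t1) \<omega> 0 \<longlonglongrightarrow> 0"
proof (rule tendsto_sandwich[OF _ _ tendsto_const lim_aux[of "\<bar>lam * t1\<bar>"]])
  define f where "f m \<theta> = ln (opnorm (Biter lam (Tper 0 t1) \<omega> 0 m \<theta>))" for m \<theta>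
  have I: "0 \<le> integral {0..2*pi} (f m) \<and> integral {0..2*pi} (f m) \<le> 2 * pi * ln (1 + real m * \<bar>lam * t1\<bar>)" for m
  proof (cases "f m integrable_on {0..2*pi}")
    case True
    have "0 \<le> integral {0..2*pi} (f m)"
      using True f_bounds by (intro integral_nonneg) (auto simp: f_def)
    moreover have "integral {0..2*pi} (f m) \<le> integral {0..2*pi} (\<lambda>_. ln (1 + real m * \<bar>lam * t1\<bar>))"
      using True f_bounds by (intro integral_le) (auto simp: f_def)
    ultimately show ?thesis by simp
  next
    case False
    then show ?thesis
      by (simp add: not_integrable_integral)
  qed
  show "\<forall>\<^sub>F m in sequentially. 0 \<le> lyap_term lam (Tper t0 t1) \<omega> 0 m"
    using I unfolding lyap_term_def assms(2) f_def by (auto intro!: always_eventually)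
  show "\<forall>\<^sub>F m in sequentially. lyap_term lam (Tper t0 t1) \<omega> 0 m \<le> ln (1 + real m * \<bar>lam * t1\<bar>) / (2 * real m)"
  proof (intro always_eventually allI)
    fix m
    have "integral {0..2*pi} (f m) / (2 * pi) \<le> ln (1 + real m * \<bar>lam * t1\<bar>)"
      using I[of m] by (simp add: divide_le_eq mult.commute)
    then have "1 / (2 * real m) * (integral {0..2*pi} (f m) / (2 * pi)) \<le> 1 / (2 * real m) * ln (1 + real m * \<bar>lam * t1\<bar>)"
      by (intro mult_left_mono) auto
    then show "lyap_term lam (Tper t0 t1) \<omega> 0 m \<le> ln (1 + real m * \<bar>lam * t1\<bar>) / (2 * real m)"
      unfolding lyap_term_def assms(2) f_def by simp
  qed
qed simp

end
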